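(* Let $b>0$, let $x_0$ be as in the context and $\bar x:=\frac{a+\rho c}{\rho+b}$. Then $\bar x<x_0$.
   Context: Constants: $a\in\mathbb{R}$, $b>0$, $\sigma>0$, $\rho>0$, $c>0$. $\psi(x)=e^{\frac{(bx-a)^2}{2\sigma^2 b}}D_{-\rho/b}\big(-\frac{bx-a}{\sigma b}\sqrt{2b}\big)$ with $D_\beta(x)=\frac{e^{-x^2/4}}{\Gamma(-\beta)}\int_0^\infty t^{-\beta-1}e^{-t^2/2-xt}dt$ ($\beta<0$); $\psi$ is the positive, strictly increasing, strictly convex fundamental solution of $\frac12\sigma^2u''+(a-bx)u'-\rho u=0$. $x_0$ is the unique solution on $(c,\infty)$ of $(x-c)\psi'(x)-\psi(x)=0$. *)

theory Defs
  imports "HOL-Analysis.Analysis"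
begin

text \<open>Parabolic cylinder function via its integral representation (for beta < 0).\<close>
definition parab_D :: "real \<Rightarrow> real \<Rightarrow> real" where
  "parab_D \<beta> x = exp (- x\<^sup>2 / 4) / Gamma (- \<beta>) *
     integral {0<..} (\<lambda>t. t powr (- \<beta> - 1) * exp (- t\<^sup>2 / 2 - x * t))"

text \<open>The increasing fundamental solution psi of
  (1/2) sigma^2 u'' + (a - b x) u' - rho u = 0.\<close>
definition psi :: "real \<Rightarrow> real \<Rightarrow> real \<Rightarrow> real \<Rightarrow> real \<Rightarrow> real" where
  "psi a b \<sigma> \<rho> x = exp ((b * x - a)\<^sup>2 / (2 * \<sigma>\<^sup>2 * b)) *
     parab_D (- \<rho> / b) (- ((b * x - a) / (\<sigma> * b)) * sqrt (2 * b))"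

end

theory Submission imports Defs "HOL-Real_Asymp.Real_Asymp" begin

definition Ip :: "real \<Rightarrow> real \<Rightarrow> real" where
  "Ip p s = integral {0<..} (\<lambda>t. t powr p * exp (- t\<^sup>2 / 2 + s * t))"

lemma gamma_ai:
  fixes p s :: real assumes "p > -1"
  shows "(\<lambda>t. t powr p / exp t) absolutely_integrable_on {0<..}"
proof -
  have "((\<lambda>t. t powr (p + 1 - 1) / exp t) has_integral Gamma (p+1)) {0..}"
    by (rule Gamma_integral_real) (use assms in auto)
  hence "(\<lambda>t. t powr p / exp t) integrable_on {0..}" by (auto simp: integrable_on_def)
  hence "(\<lambda>t. t powr p / exp t) absolutely_integrable_on {0..}"
    by (rule nonnegative_absolutely_integrable_1) auto
  thus ?thesis by (rule set_integrable_subset) auto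
qed

lemma ai:
  fixes p s :: real assumes "p > -1"
  shows "(\<lambda>t. t powr p * exp (- t\<^sup>2 / 2 + s * t)) absolutely_integrable_on {0<..}"
proof (rule measurable_bounded_by_integrable_imp_absolutely_integrable)
  show "(\<lambda>t. t powr p * exp (- t\<^sup>2 / 2 + s * t)) \<in> borel_measurable (lebesgue_on {0<..})"
    by (rule continuous_imp_measurable_on_sets_lebesgue) (auto intro!: continuous_intros)
  show "{0::real<..} \<in> sets lebesgue" by simp
  show "(\<lambda>t. exp ((s+1)\<^sup>2/2) * (t powr p / exp t)) integrable_on {0<..}"
    using set_lebesgue_integral_eq_integral(1)[OF gamma_ai[OF assms]] by (rule integrable_on_mult_right)
  fix t :: real assume t: "t \<in> {0<..}"
  have "- t\<^sup>2 / 2 + s * t \<le> (s+1)\<^sup>2/2 - t"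
    using sum_power2_ge_zero[of "t - (s+1)" 0] by (simp add: power2_eq_square algebra_simps)
  hence "exp (- t\<^sup>2 / 2 + s * t) \<le> exp ((s+1)\<^sup>2/2 - t)"
    by (subst exp_le_cancel_iff)
  hence that: "exp (- t\<^sup>2 / 2 + s * t) \<le> exp ((s+1)\<^sup>2/2) / exp t"
    by (simp only: exp_diff)
  show "norm (t powr p * exp (- t\<^sup>2 / 2 + s * t)) \<le> exp ((s+1)\<^sup>2/2) * (t powr p / exp t)"
    using t mult_left_mono[OF that, of "t powr p"]
    by (simp add: abs_mult mult.commute)
qed

lemma intg: fixes p s :: real shows "p > -1 \<Longrightarrow> (\<lambda>t. t powr p * exp (- t\<^sup>2 / 2 + s * t)) integrable_on {0<..}"
  using set_lebesgue_integral_eq_integral(1)[OF ai] by blast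

lemma exp_taylor2: fixes x :: real shows "\<bar>exp x - 1 - x\<bar> \<le> exp \<bar>x\<bar> * x\<^sup>2"
proof -
  obtain u where u: "\<bar>u\<bar> \<le> \<bar>x\<bar>" "exp x = (\<Sum>m<2. (x ^ m) / fact m) + (exp u / fact 2) * x ^ 2"
    using Maclaurin_exp_le[of x 2] by blast
  hence "exp x - 1 - x = exp u / 2 * x\<^sup>2" by (simp add: numeral_2_eq_2)
  moreover have "exp u \<le> exp \<bar>x\<bar>" using u(1) by simp
  moreover have nn: "0 \<le> exp u / 2 * x\<^sup>2" by simp
  ultimately have "\<bar>exp x - 1 - x\<bar> = exp u / 2 * x\<^sup>2" by (metis abs_of_nonneg)
  also have "\<dots> \<le> exp \<bar>x\<bar> * x\<^sup>2"
  proof -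
    have "exp u / 2 \<le> exp \<bar>x\<bar>" using \<open>exp u \<le> exp \<bar>x\<bar>\<close> exp_gt_zero[of u] by linarith
    thus ?thesis by (rule mult_right_mono) simp
  qed
  finally show ?thesis .
qed

lemma Ip_bound:
  fixes q s h :: real
  assumes q: "q > -1" and h: "\<bar>h\<bar> \<le> 1"
  shows "\<bar>Ip q (s+h) - Ip q s - h * Ip (q+1) s\<bar> \<le> h\<^sup>2 * Ip (q+2) (s+1)"
proof -
  let ?E = "\<lambda>t. exp (- t\<^sup>2 / 2 + s * t)"
  have i1: "(\<lambda>t. t powr q * exp (- t\<^sup>2 / 2 + (s+h) * t)) integrable_on {0<..}" by (rule intg) (use q in auto)
  have i2: "(\<lambda>t. t powr q * exp (- t\<^sup>2 / 2 + s * t)) integrable_on {0<..}" by (rule intg) (use q in auto)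
  have i3: "(\<lambda>t. h * (t powr (q+1) * exp (- t\<^sup>2 / 2 + s * t))) integrable_on {0<..}"
    by (rule integrable_on_mult_right, rule intg) (use q in auto)
  have i4: "(\<lambda>t. h\<^sup>2 * (t powr (q+2) * exp (- t\<^sup>2 / 2 + (s+1) * t))) integrable_on {0<..}"
    by (rule integrable_on_mult_right, rule intg) (use q in auto)
  have "Ip q (s+h) - Ip q s - h * Ip (q+1) s =
     integral {0<..} (\<lambda>t. t powr q * exp (- t\<^sup>2 / 2 + (s+h) * t) - t powr q * exp (- t\<^sup>2 / 2 + s * t)
        - h * (t powr (q+1) * exp (- t\<^sup>2 / 2 + s * t)))"
    unfolding Ip_def
    by (simp only: integral_diff[OF integrable_diff[OF i1 i2] i3] integral_diff[OF i1 i2] integral_mult_right)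
  also have "\<dots> = integral {0<..} (\<lambda>t. t powr q * ?E t * (exp (h*t) - 1 - h*t))"
  proof (rule integral_cong)
    fix t :: real assume t: "t \<in> {0<..}"
    have "exp (- t\<^sup>2 / 2 + (s+h) * t) = ?E t * exp (h*t)"
      by (simp add: exp_add[symmetric] algebra_simps)
    moreover have "t powr (q+1) = t powr q * t" using t by (simp add: powr_add)
    ultimately show "t powr q * exp (- t\<^sup>2 / 2 + (s+h) * t) - t powr q * exp (- t\<^sup>2 / 2 + s * t)
        - h * (t powr (q+1) * exp (- t\<^sup>2 / 2 + s * t)) = t powr q * ?E t * (exp (h*t) - 1 - h*t)"
      by (simp add: algebra_simps)
  qed
  finally have eq: "Ip q (s+h) - Ip q s - h * Ip (q+1) s = integral {0<..} (\<lambda>t. t powr q * ?E t * (exp (h*t) - 1 - h*t))" .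
  have i5: "(\<lambda>t. t powr q * ?E t * (exp (h*t) - 1 - h*t)) integrable_on {0<..}"
  proof -
    have "(\<lambda>t. t powr q * exp (- t\<^sup>2 / 2 + (s+h) * t) - t powr q * exp (- t\<^sup>2 / 2 + s * t)
        - h * (t powr (q+1) * exp (- t\<^sup>2 / 2 + s * t))) integrable_on {0<..}"
      by (intro integrable_diff i1 i2 i3)
    thus ?thesis
    proof (rule integrable_spike_finite[where S="{}", rotated 2], simp)
      fix t :: real assume t: "t \<in> {0<..} - {}"
      have "exp (- t\<^sup>2 / 2 + (s+h) * t) = ?E t * exp (h*t)"
        by (simp add: exp_add[symmetric] algebra_simps)
      moreover have "t powr (q+1) = t powr q * t" using t by (simp add: powr_add)
      ultimately show "t powr q * ?E t * (exp (h*t) - 1 - h*t) = t powr q * exp (- t\<^sup>2 / 2 + (s+h) * t) - t powr q * exp (- t\<^sup>2 / 2 + s * t)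
        - h * (t powr (q+1) * exp (- t\<^sup>2 / 2 + s * t))"
        by (simp add: algebra_simps)
    qed
  qed
  have "norm (integral {0<..} (\<lambda>t. t powr q * ?E t * (exp (h*t) - 1 - h*t)))
      \<le> integral {0<..} (\<lambda>t. h\<^sup>2 * (t powr (q+2) * exp (- t\<^sup>2 / 2 + (s+1) * t)))"
  proof (rule integral_norm_bound_integral[OF i5 i4])
    fix t :: real assume t: "t \<in> {0<..}"
    have "\<bar>exp (h*t) - 1 - h*t\<bar> \<le> exp \<bar>h*t\<bar> * (h*t)\<^sup>2" by (rule exp_taylor2)
    also have "\<dots> \<le> exp t * (h*t)\<^sup>2"
    proof -
      have "\<bar>h*t\<bar> \<le> t" using h t by (simp add: abs_mult mult_left_le_one_le)
      thus ?thesis by (intro mult_right_mono) auto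
    qed
    finally have b: "\<bar>exp (h*t) - 1 - h*t\<bar> \<le> exp t * (h*t)\<^sup>2" .
    have "norm (t powr q * ?E t * (exp (h*t) - 1 - h*t)) = t powr q * ?E t * \<bar>exp (h*t) - 1 - h*t\<bar>"
      by (simp add: abs_mult)
    also have "\<dots> \<le> t powr q * ?E t * (exp t * (h*t)\<^sup>2)"
      by (rule mult_left_mono[OF b]) simp
    also have "\<dots> = h\<^sup>2 * (t powr (q+2) * exp (- t\<^sup>2 / 2 + (s+1) * t))"
    proof -
      have "t powr (q+2) = t powr q * t\<^sup>2" using t by (simp add: powr_add)
      moreover have "exp (- t\<^sup>2 / 2 + (s+1) * t) = ?E t * exp t"
        by (simp add: exp_add[symmetric] algebra_simps)
      ultimately show ?thesis by (simp add: power_mult_distrib)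
    qed
    finally show "norm (t powr q * ?E t * (exp (h*t) - 1 - h*t)) \<le> h\<^sup>2 * (t powr (q+2) * exp (- t\<^sup>2 / 2 + (s+1) * t))" .
  qed
  also have "\<dots> = h\<^sup>2 * Ip (q+2) (s+1)" unfolding Ip_def by (simp add: integral_mult_right)
  finally show ?thesis using eq by simp
qed

lemma quot_bound: fixes X h K :: real assumes B: "\<bar>X\<bar> \<le> h\<^sup>2 * K" and h0: "h \<noteq> 0"
  shows "\<bar>X\<bar> / \<bar>h\<bar> \<le> \<bar>h\<bar> * K"
proof -
  have hp: "\<bar>h\<bar> > 0" using h0 by simp
  have e: "h\<^sup>2 * K = (\<bar>h\<bar> * K) * \<bar>h\<bar>" by (simp add: power2_eq_square algebra_simps)
  show ?thesis using B unfolding e by (simp add: pos_divide_le_eq[OF hp])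
qed

lemma Ip_deriv:
  fixes q s :: real
  assumes q: "q > -1"
  shows "(Ip q has_real_derivative Ip (q+1) s) (at s)"
proof -
  define K where "K = Ip (q+2) (s+1)"
  have "((\<lambda>y. (Ip q y - Ip q s) / (y - s) - Ip (q+1) s) \<longlongrightarrow> 0) (at s)"
  proof (rule Lim_null_comparison)
    have "((\<lambda>y. \<bar>y - s\<bar> * K) \<longlongrightarrow> \<bar>s - s\<bar> * K) (at s)" by (intro tendsto_intros)
    thus "((\<lambda>y. \<bar>y - s\<bar> * K) \<longlongrightarrow> 0) (at s)" by simp
    show "\<forall>\<^sub>F y in at s. norm ((Ip q y - Ip q s) / (y - s) - Ip (q+1) s) \<le> \<bar>y - s\<bar> * K"
    proof -
    have P: "norm ((Ip q y - Ip q s) / (y - s) - Ip (q+1) s) \<le> \<bar>y - s\<bar> * K"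
      if y: "y \<noteq> s \<and> dist y s < 1" for y
    proof -
      have h0: "y - s \<noteq> 0" and h1: "\<bar>y - s\<bar> \<le> 1" using y by (auto simp: dist_real_def)
      have B: "\<bar>Ip q y - Ip q s - (y - s) * Ip (q+1) s\<bar> \<le> (y - s)\<^sup>2 * K"
        using Ip_bound[OF q h1, of s] unfolding K_def by simp
      have eq: "(Ip q y - Ip q s) / (y - s) - Ip (q+1) s = (Ip q y - Ip q s - (y - s) * Ip (q+1) s) / (y - s)"
        using h0 by (simp add: diff_divide_distrib)
      show "norm ((Ip q y - Ip q s) / (y - s) - Ip (q+1) s) \<le> \<bar>y - s\<bar> * K"
        unfolding eq real_norm_def abs_divide by (rule quot_bound[OF B h0])
    qed
    show ?thesis unfolding eventually_at using P by (intro exI[of _ 1]) auto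
    qed
  qed
  hence "((\<lambda>y. (Ip q y - Ip q s) / (y - s)) \<longlongrightarrow> Ip (q+1) s) (at s)" by (rule LIM_zero_cancel)
  thus ?thesis by (simp add: has_field_derivative_iff)
qed

lemma Ip_identity:
  fixes v s :: real
  assumes v: "v > 0"
  shows "v * Ip (v-1) s + s * Ip v s = Ip (v+1) s"
proof -
  define E where "E t = exp (- t\<^sup>2 / 2 + s * t)" for t
  define f where "f t = v * (t powr (v-1) * E t) + s * (t powr v * E t) - t powr (v+1) * E t" for t
  define F where "F t = t powr v * E t" for t
  have a1: "(\<lambda>t. t powr (v-1) * E t) absolutely_integrable_on {0<..}" unfolding E_def by (rule ai) (use v in auto)
  have a2: "(\<lambda>t. t powr v * E t) absolutely_integrable_on {0<..}" unfolding E_def by (rule ai) (use v in auto)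
  have a3: "(\<lambda>t. t powr (v+1) * E t) absolutely_integrable_on {0<..}" unfolding E_def by (rule ai) (use v in auto)
  have fL: "f absolutely_integrable_on {0<..}"
    unfolding f_def by (intro set_integral_diff(1) set_integral_add(1) set_integrable_mult_right a1 a2 a3)
  have cf: "continuous_on {0<..} f"
    unfolding f_def E_def by (auto intro!: continuous_intros)
  have mf: "(\<lambda>x. indicator {0<..} x *\<^sub>R f x) \<in> borel_measurable lborel"
    using borel_measurable_continuous_on_indicator[OF _ cf] by simp
  have fB: "set_integrable lborel {0<..} f"
    using fL mf unfolding set_integrable_def by (simp add: integrable_completion)
  have D: "(F has_vector_derivative f x) (at x)" if x: "0 < x" for x
  proof -
    have "(F has_real_derivative v * x powr (v - 1) * E x + x powr v * (E x * (- (2 * x) / 2 + s))) (at x)"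
      unfolding F_def E_def using x
      by (auto intro!: derivative_eq_intros)
    moreover have "v * x powr (v - 1) * E x + x powr v * (E x * (- (2 * x) / 2 + s)) = f x"
    proof -
      have "x powr (v+1) = x powr v * x" using x by (simp add: powr_add)
      thus ?thesis unfolding f_def by (simp add: algebra_simps)
    qed
    ultimately show ?thesis by (simp add: has_real_derivative_iff_has_vector_derivative)
  qed
  have L0: "(F \<longlongrightarrow> 0) (at_right 0)" unfolding F_def E_def using v by real_asymp
  have L1: "(F \<longlongrightarrow> 0) at_top" unfolding F_def E_def using v by real_asymp
  have "(LBINT x=0..\<infinity>. f x) = 0 - 0"
  proof (rule interval_integral_FTC_integrable)
    show "(0::ereal) < \<infinity>" by simp
    show "(F has_vector_derivative f x) (at x)" if "0 < ereal x" "ereal x < \<infinity>" for x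
      using that D by (simp add: zero_ereal_def)
    show "isCont f x" if "0 < ereal x" "ereal x < \<infinity>" for x
      using that cf by (simp add: zero_ereal_def continuous_on_eq_continuous_at)
    show "set_integrable lborel (einterval 0 \<infinity>) f" using fB by (simp add: zero_ereal_def)
    show "((F \<circ> real_of_ereal) \<longlongrightarrow> 0) (at_right 0)" using L0 by (simp add: zero_ereal_def ereal_tendsto_simps)
    show "((F \<circ> real_of_ereal) \<longlongrightarrow> 0) (at_left \<infinity>)" using L1 by (simp add: ereal_tendsto_simps)
  qed
  hence "(LINT x:{0<..}|lborel. f x) = 0"
    using interval_integral_to_infinity_eq[where M=lborel and a=0 and f=f] by (simp add: zero_ereal_def)
  hence I0: "integral {0<..} f = 0" using set_borel_integral_eq_integral(2)[OF fB] by simp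
  have i1: "(\<lambda>t. t powr (v-1) * E t) integrable_on {0<..}" using set_lebesgue_integral_eq_integral(1)[OF a1] .
  have i2: "(\<lambda>t. t powr v * E t) integrable_on {0<..}" using set_lebesgue_integral_eq_integral(1)[OF a2] .
  have i3: "(\<lambda>t. t powr (v+1) * E t) integrable_on {0<..}" using set_lebesgue_integral_eq_integral(1)[OF a3] .
  have "integral {0<..} f = v * Ip (v-1) s + s * Ip v s - Ip (v+1) s"
    unfolding f_def Ip_def E_def[symmetric]
    by (simp only: integral_diff[OF integrable_add[OF integrable_on_mult_right[OF i1] integrable_on_mult_right[OF i2]] i3]
          integral_add[OF integrable_on_mult_right[OF i1] integrable_on_mult_right[OF i2]] integral_mult_right)
  with I0 show ?thesis by simp
qed

lemma Ip_nonneg: "0 \<le> Ip p s" if "p > -1"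
  unfolding Ip_def by (rule integral_nonneg[OF intg[OF that]]) auto

lemma Ip_pos: fixes p s :: real assumes p: "p > 0" shows "0 < Ip p s"
proof -
  define m where "m = exp (-2 - 2 * \<bar>s\<bar>)"
  have ic: "(\<lambda>t. t powr p * exp (- t\<^sup>2 / 2 + s * t)) integrable_on {1..2}"
    by (rule integrable_continuous_interval) (auto intro!: continuous_intros)
  have "m = integral {1..2::real} (\<lambda>t. m)" by simp
  also have "\<dots> \<le> integral {1..2} (\<lambda>t. t powr p * exp (- t\<^sup>2 / 2 + s * t))"
  proof (rule integral_le[OF _ ic])
    show "(\<lambda>t. m) integrable_on {1..2::real}" by (rule integrable_continuous_interval) (rule continuous_on_const)
    fix t :: real assume t: "t \<in> {1..2}"
    have "1 \<le> t powr p" using t p by (simp add: ge_one_powr_ge_zero)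
    moreover have "m \<le> exp (- t\<^sup>2 / 2 + s * t)"
    proof -
      have "t\<^sup>2 \<le> 2\<^sup>2" using t by (intro power_mono) auto
      hence "t\<^sup>2 \<le> 4" by simp
      moreover have "\<bar>s * t\<bar> \<le> 2 * \<bar>s\<bar>" proof -
        have "\<bar>s * t\<bar> = \<bar>s\<bar> * t" using t by (simp add: abs_mult)
        also have "\<dots> \<le> \<bar>s\<bar> * 2" using t by (intro mult_left_mono) auto
        finally show ?thesis by simp
      qed
      ultimately have "-2 - 2 * \<bar>s\<bar> \<le> - t\<^sup>2 / 2 + s * t" by linarith
      thus ?thesis unfolding m_def by simp
    qed
    ultimately show "m \<le> t powr p * exp (- t\<^sup>2 / 2 + s * t)"
      using mult_mono[of 1 "t powr p" m "exp (- t\<^sup>2 / 2 + s * t)"] unfolding m_def by simp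
  qed
  also have "\<dots> \<le> Ip p s" unfolding Ip_def
    by (rule integral_subset_le[OF _ ic intg]) (use p in auto)
  moreover have "0 < m" unfolding m_def by simp
  ultimately show ?thesis by linarith
qed

lemma psi_eq:
  fixes a b \<sigma> \<rho> x :: real
  assumes "b > 0" "\<sigma> > 0"
  shows "psi a b \<sigma> \<rho> x = Ip (\<rho>/b - 1) (sqrt (2*b) / (\<sigma>*b) * (b*x - a)) / Gamma (\<rho>/b)"
proof -
  define z where "z = - ((b * x - a) / (\<sigma> * b)) * sqrt (2 * b)"
  have "z\<^sup>2 = ((b * x - a) / (\<sigma> * b))\<^sup>2 * (2 * b)"
  proof -
    have "z\<^sup>2 = ((b * x - a) * sqrt (2 * b) / (\<sigma> * b))\<^sup>2" unfolding z_def by (simp add: power2_eq_square)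
    also have "\<dots> = ((b * x - a) / (\<sigma> * b))\<^sup>2 * (2 * b)"
      using assms by (simp add: power_divide power_mult_distrib)
    finally show ?thesis .
  qed
  moreover have "((b * x - a) / (\<sigma> * b))\<^sup>2 * (2 * b) / 4 = (b * x - a)\<^sup>2 / (2 * \<sigma>\<^sup>2 * b)"
    using assms by (simp add: power_divide power_mult_distrib field_simps power2_eq_square)
  ultimately have z2: "z\<^sup>2 / 4 = (b * x - a)\<^sup>2 / (2 * \<sigma>\<^sup>2 * b)" by simp
  have e: "exp ((b * x - a)\<^sup>2 / (2 * \<sigma>\<^sup>2 * b)) * exp (- z\<^sup>2 / 4) = 1"
    by (simp add: z2[symmetric] exp_add[symmetric])
  have "integral {0<..} (\<lambda>t. t powr (- (- \<rho> / b) - 1) * exp (- t\<^sup>2 / 2 - z * t))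
      = Ip (\<rho>/b - 1) (sqrt (2*b) / (\<sigma>*b) * (b*x - a))"
    unfolding Ip_def by (rule integral_cong) (simp add: z_def algebra_simps)
  hence "psi a b \<sigma> \<rho> x = exp ((b * x - a)\<^sup>2 / (2 * \<sigma>\<^sup>2 * b)) * (exp (- z\<^sup>2 / 4) / Gamma (\<rho>/b) *
      Ip (\<rho>/b - 1) (sqrt (2*b) / (\<sigma>*b) * (b*x - a)))"
    unfolding psi_def parab_D_def z_def[symmetric] by simp
  also have "\<dots> = Ip (\<rho>/b - 1) (sqrt (2*b) / (\<sigma>*b) * (b*x - a)) / Gamma (\<rho>/b)"
    using e by (simp add: field_simps)
  finally show ?thesis .
qed

theorem lemmaB1:
  fixes a b \<sigma> \<rho> c x\<^sub>0 :: real
  assumes "b > 0" and "\<sigma> > 0" and "\<rho> > 0" and "c > 0"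
    and "x\<^sub>0 > c"
    and "(x\<^sub>0 - c) * deriv (psi a b \<sigma> \<rho>) x\<^sub>0 - psi a b \<sigma> \<rho> x\<^sub>0 = 0"
  shows "(a + \<rho> * c) / (\<rho> + b) < x\<^sub>0"
proof -
  define v where "v = \<rho> / b"
  define k where "k = sqrt (2*b) / (\<sigma>*b)"
  define s0 where "s0 = k * (b * x\<^sub>0 - a)"
  have v: "v > 0" unfolding v_def using assms by simp
  have k: "k > 0" unfolding k_def using assms by simp
  have rho: "\<rho> = b * v" unfolding v_def using assms by simp
  have Gp: "Gamma v > 0" using v by (rule Gamma_real_pos)
  have pe: "psi a b \<sigma> \<rho> = (\<lambda>x. Ip (v - 1) (k * (b*x - a)) / Gamma v)"
    using psi_eq[OF assms(1,2)] unfolding v_def k_def by auto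
  have "((\<lambda>x. Ip (v - 1) (k * (b*x - a)) / Gamma v) has_real_derivative
      Ip v s0 * (k * b) / Gamma v) (at x\<^sub>0)"
  proof -
    have d1: "(Ip (v-1) has_real_derivative Ip v s0) (at s0)"
      using Ip_deriv[of "v-1" s0] v by simp
    have d2: "((\<lambda>x. k * (b*x - a)) has_real_derivative k * b) (at x\<^sub>0)"
      by (auto intro!: derivative_eq_intros)
    have "((\<lambda>x. Ip (v - 1) (k * (b*x - a))) has_real_derivative Ip v s0 * (k * b)) (at x\<^sub>0)"
      using DERIV_chain2[OF d1[unfolded s0_def] d2] by (simp add: s0_def)
    thus ?thesis using Gp by (intro derivative_eq_intros) auto
  qed
  hence dd: "deriv (psi a b \<sigma> \<rho>) x\<^sub>0 = Ip v s0 * (k * b) / Gamma v"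
    unfolding pe by (rule DERIV_imp_deriv)
  have px: "psi a b \<sigma> \<rho> x\<^sub>0 = Ip (v - 1) s0 / Gamma v" unfolding pe s0_def by simp
  have h: "(x\<^sub>0 - c) * (Ip v s0 * (k * b)) = Ip (v - 1) s0"
  proof -
    have "((x\<^sub>0 - c) * (Ip v s0 * (k * b))) / Gamma v = Ip (v - 1) s0 / Gamma v"
      using assms(6) unfolding dd px by simp
    thus ?thesis using Gp by (simp add: divide_cancel_right)
  qed
  have idn: "v * Ip (v-1) s0 + s0 * Ip v s0 = Ip (v+1) s0" by (rule Ip_identity[OF v])
  have H: "Ip (v+1) s0 > 0" by (rule Ip_pos) (use v in simp)
  have G: "Ip v s0 \<ge> 0" by (rule Ip_nonneg) (use v in simp)
  define Ex where "Ex = \<rho> * (x\<^sub>0 - c) + (b * x\<^sub>0 - a)"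
  have eqKB: "k * b * Ip v s0 * Ex = b * Ip (v+1) s0"
  proof -
    have "k * b * Ip v s0 * Ex = \<rho> * ((x\<^sub>0 - c) * (Ip v s0 * (k * b))) + b * (k * (b * x\<^sub>0 - a)) * Ip v s0"
      unfolding Ex_def by (simp add: algebra_simps)
    also have "\<dots> = b * (v * Ip (v-1) s0 + s0 * Ip v s0)"
      unfolding h s0_def[symmetric] rho by (simp add: algebra_simps)
    finally show ?thesis using idn by simp
  qed
  have "k * b * Ip v s0 * Ex > 0" using mult_pos_pos[OF assms(1) H] by (simp only: eqKB)
  moreover have "k * b * Ip v s0 \<ge> 0" using k G assms(1) by simp
  ultimately have "Ex > 0"
  proof -
    assume gt: "k * b * Ip v s0 * Ex > 0" and ge: "k * b * Ip v s0 \<ge> 0"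
    show "Ex > 0"
    proof (rule ccontr)
      assume "\<not> Ex > 0"
      hence "Ex \<le> 0" by simp
      hence "k * b * Ip v s0 * Ex \<le> 0" using mult_nonneg_nonpos[OF ge] by simp
      with gt show False by simp
    qed
  qed
  thus ?thesis unfolding Ex_def using assms by (simp add: field_simps)
qed

end
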